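(* Let $T=\inf\{t\ge0: p_t<p\}$ be the first time at which ${\sf PEAR}$ recommends two popular items. Conditional on $V_{\sf N}=(1-p)/p$, $T$ has the same distribution as $N(\rho_1,c)$; conditional on $V_{\sf N}=-1$, $T$ has the same distribution as $N(\rho_2,c)$. (In particular, ${\sf PEAR}$ recommends one popular and one niche item at times $0,\dots,T-1$ and two popular items at all times $t\ge T$.)
   Context: Model. Time $t=0,1,2,\dots$. Two item types, popular ${\sf P}$ and niche ${\sf N}$, infinitely many items each; at each time $t$ the platform recommends a set of two fresh items of chosen types. Utility of item $i$: $u_i=V_{\tau(i)}+\epsilon_i$; outside option: $u_\emptyset=\epsilon_\emptyset$; all noises i.i.d. Gumbel with scale $1$ and mean $0$. User chooses the utility-maximizing option among the recommended items and the outside option. $V_{\sf P}\ge0$ is a known constant; $V_{\sf N}$ is drawn once, fixed over time, independent of noise, with $\mathbb P(V_{\sf N}=(1-p)/p)=p$, $\mathbb P(V_{\sf N}=-1)=1-p$, $p\in(0,1)$. Constants: $\rho_1=\frac{e^{(1-p)/p}}{1+e^{V_{\sf P}}+e^{(1-p)/p}}$, $\rho_2=\frac{e^{-1}}{1+e^{V_{\sf P}}+e^{-1}}$, $c=\frac{\ln((1-\rho_2)/(1-\rho_1))}{\ln(\rho_1/\rho_2)+\ln((1-\rho_2)/(1-\rho_1))}$. Random walk: for $\rho,x\in[0,1]$ let $X_1(\rho,x),X_2(\rho,x),\dots$ be i.i.d. with $X_k=1-x$ w.p. $\rho$ and $X_k=-x$ w.p. $1-\rho$; $S_n(\rho,x)=\sum_{k=1}^nX_k(\rho,x)$;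 $N(\rho,x)=\inf\{n\ge1: S_n(\rho,x)<0\}$. Policy ${\sf PEAR}$: maintain counters $S,F$ (initially $0$) and $p_0=p$. At each time $t$: if $p_t\ge p$, recommend one popular and one niche item; if the niche item is chosen increment $S$, otherwise (popular item or outside option chosen) increment $F$. If $p_t<p$, recommend two popular items. Then set $p_{t+1}=\left(1+\frac{1-p}{p}\cdot\frac{\rho_2^S(1-\rho_2)^F}{\rho_1^S(1-\rho_1)^F}\right)^{-1}$. *)

theory Defs
  imports "HOL-Probability.Probability"
begin

definition rho1 :: "real \<Rightarrow> real \<Rightarrow> real" where
  "rho1 p VP = exp ((1 - p) / p) / (1 + exp VP + exp ((1 - p) / p))"

definition rho2 :: "real \<Rightarrow> real \<Rightarrow> real" where
  "rho2 p VP = exp (-1) / (1 + exp VP + exp (-1))"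

definition cconst :: "real \<Rightarrow> real \<Rightarrow> real" where
  "cconst p VP =
     ln ((1 - rho2 p VP) / (1 - rho1 p VP)) /
     (ln (rho1 p VP / rho2 p VP) + ln ((1 - rho2 p VP) / (1 - rho1 p VP)))"

definition first_time :: "(nat \<Rightarrow> bool) \<Rightarrow> enat" where
  "first_time P = (if \<exists>t. P t then enat (LEAST t. P t) else \<infinity>)"

text \<open>Noise realisation \<open>e t k\<close>: at time t, \<open>k = 0\<close> the popular item, \<open>k = 1\<close> the niche
  item, \<open>k = 2\<close> the outside option (when one popular and one niche item are shown).
  \<open>vN\<close> is the realised value of \<open>V_N\<close>.  The niche item is chosen iff its utility is
  strictly the largest (ties have probability zero).\<close>
definition niche_chosen :: "real \<Rightarrow> real \<Rightarrow> (nat \<Rightarrow> nat \<Rightarrow> real) \<Rightarrow> nat \<Rightarrow> bool" where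
  "niche_chosen VP vN e t \<longleftrightarrow> vN + e t 1 > VP + e t 0 \<and> vN + e t 1 > e t 2"

definition pear_post :: "real \<Rightarrow> real \<Rightarrow> nat \<times> nat \<Rightarrow> real" where
  "pear_post p VP SF = (case SF of (S, F) \<Rightarrow>
     inverse (1 + (1 - p) / p *
       ((rho2 p VP ^ S * (1 - rho2 p VP) ^ F) / (rho1 p VP ^ S * (1 - rho1 p VP) ^ F))))"

fun pear_state :: "real \<Rightarrow> real \<Rightarrow> real \<Rightarrow> (nat \<Rightarrow> nat \<Rightarrow> real) \<Rightarrow> nat \<Rightarrow> (nat \<times> nat) \<times> real" where
  "pear_state p VP vN e 0 = ((0, 0), p)"
| "pear_state p VP vN e (Suc t) =
     (case pear_state p VP vN e t of ((S, F), pt) \<Rightarrow>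
        let SF' = (if pt \<ge> p then (if niche_chosen VP vN e t then (S + 1, F) else (S, F + 1))
                   else (S, F))
        in (SF', pear_post p VP SF'))"

definition pear_p :: "real \<Rightarrow> real \<Rightarrow> real \<Rightarrow> (nat \<Rightarrow> nat \<Rightarrow> real) \<Rightarrow> nat \<Rightarrow> real" where
  "pear_p p VP vN e t = snd (pear_state p VP vN e t)"

definition pear_T :: "real \<Rightarrow> real \<Rightarrow> real \<Rightarrow> (nat \<Rightarrow> nat \<Rightarrow> real) \<Rightarrow> enat" where
  "pear_T p VP vN e = first_time (\<lambda>t. pear_p p VP vN e t < p)"

text \<open>Probability space of i.i.d. Bernoulli(rho) coin flips; flip k-1 determines X_k.\<close>
definition rw_space :: "real \<Rightarrow> bool stream measure" where
  "rw_space rho = stream_space (measure_pmf (bernoulli_pmf rho))"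

definition rw_S :: "real \<Rightarrow> bool stream \<Rightarrow> nat \<Rightarrow> real" where
  "rw_S x \<omega> n = (\<Sum>k<n. if \<omega> !! k then 1 - x else - x)"

definition rw_N :: "real \<Rightarrow> bool stream \<Rightarrow> enat" where
  "rw_N x \<omega> = first_time (\<lambda>n. n \<ge> 1 \<and> rw_S x \<omega> n < 0)"

end

theory Submission
  imports Defs
begin


lemma first_time_eqI:
  assumes "\<And>t. (\<forall>s<t. \<not> Q s) \<Longrightarrow> (P t \<longleftrightarrow> Q t)"
  shows "first_time P = first_time Q"
proof (cases "\<exists>t. Q t")
  case True
  define t0 where "t0 = (LEAST t. Q t)"
  have Qt0: "Q t0" using True unfolding t0_def by (meson LeastI)
  have nQ: "\<forall>s<t0. \<not> Q s" unfolding t0_def using not_less_Least by blast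
  have Pt0: "P t0" using assms[OF nQ] Qt0 by simp
  have nP: "\<not> P s" if "s < t0" for s
  proof -
    have "\<forall>s'<s. \<not> Q s'" using nQ that by auto
    then show ?thesis using assms[of s] nQ that by auto
  qed
  have "(LEAST t. P t) = t0"
    using Pt0 nP by (metis Least_equality not_le)
  then show ?thesis using True Pt0 unfolding first_time_def t0_def by auto
next
  case False
  have "\<not> P t" for t using assms[of t] False by auto
  then show ?thesis using False unfolding first_time_def by auto
qed



lemma rho_props:
  assumes "0 < p" "p < 1"
  shows "0 < rho2 p VP" "rho2 p VP < rho1 p VP" "rho1 p VP < 1"
proof -
  let ?K = "1 + exp VP"
  have K: "?K > 0" by (simp add: add_pos_pos)
  show "0 < rho2 p VP" unfolding rho2_def using K by (simp add: add_pos_pos)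
  show "rho1 p VP < 1" unfolding rho1_def using K by (simp add: add_pos_pos)
  have q: "(1 - p) / p > -1" using assms by (simp add: less_divide_eq)
  have e: "exp (-1) < exp ((1 - p) / p)" using q by simp
  have "exp (-1) * (?K + exp ((1 - p) / p)) < exp ((1 - p) / p) * (?K + exp (-1))"
  proof -
    have "exp (-1) * ?K < exp ((1 - p) / p) * ?K" using e K by simp
    then show ?thesis by (simp add: algebra_simps)
  qed
  then show "rho2 p VP < rho1 p VP" unfolding rho1_def rho2_def
    using K by (simp add: divide_simps add_pos_pos algebra_simps)
qed

lemma post_zero: "0 < p \<Longrightarrow> pear_post p VP (0,0) = p"
  unfolding pear_post_def by (simp add: field_simps)

lemma post_ge_iff:
  assumes p: "0 < p" "p < 1"
  shows "p \<le> pear_post p VP (S, F) \<longleftrightarrow>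
         0 \<le> real S * (1 - cconst p VP) - real F * cconst p VP"
proof -
  define r1 where "r1 = rho1 p VP"
  define r2 where "r2 = rho2 p VP"
  have r: "0 < r2" "r2 < r1" "r1 < 1" using rho_props[OF p] unfolding r1_def r2_def by auto
  define R where "R = (r2 ^ S * (1 - r2) ^ F) / (r1 ^ S * (1 - r1) ^ F)"
  have Rpos: "R > 0" unfolding R_def using r by simp
  define A where "A = ln (r1 / r2)"
  define B where "B = ln ((1 - r2) / (1 - r1))"
  have A: "A > 0" unfolding A_def using r by simp
  have B: "B > 0" unfolding B_def using r by simp
  have lnR: "ln R = - real S * A + real F * B"
    unfolding R_def A_def B_def using r
    by (simp add: ln_div ln_mult ln_realpow algebra_simps)
  have c: "cconst p VP = B / (A + B)" unfolding cconst_def A_def B_def r1_def r2_def by simp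
  have "p \<le> pear_post p VP (S, F) \<longleftrightarrow> p * (1 + (1 - p) / p * R) \<le> 1"
  proof -
    have pos: "1 + (1 - p) / p * R > 0" using p Rpos by (simp add: add_pos_nonneg)
    have "pear_post p VP (S, F) = 1 / (1 + (1 - p) / p * R)"
      unfolding pear_post_def R_def r1_def r2_def by (simp add: inverse_eq_divide)
    then show ?thesis using pos by (simp add: le_divide_eq)
  qed
  also have "p * (1 + (1 - p) / p * R) = p + (1 - p) * R" using p by (simp add: field_simps)
  also have "p + (1 - p) * R \<le> 1 \<longleftrightarrow> (1 - p) * R \<le> (1 - p) * 1" by (simp add: algebra_simps)
  also have "\<dots> \<longleftrightarrow> R \<le> 1" using p by (simp add: mult_le_cancel_left)
  also have "\<dots> \<longleftrightarrow> ln R \<le> 0" using Rpos by simp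
  also have "\<dots> \<longleftrightarrow> 0 \<le> real S * A - real F * B" using lnR by simp
  also have "\<dots> \<longleftrightarrow> 0 \<le> (real S * A - real F * B) / (A + B)" using A B
    by (simp add: zero_le_divide_iff)
  also have "(real S * A - real F * B) / (A + B) = real S * (1 - cconst p VP) - real F * cconst p VP"
  proof -
    have ne: "A + B \<noteq> 0" using A B by simp
    have "1 - B / (A + B) = A / (A + B)" using ne by (simp add: field_simps)
    then show ?thesis unfolding c using ne by (simp add: diff_divide_distrib)
  qed
  finally show ?thesis .
qed



definition cS :: "(nat \<Rightarrow> bool) \<Rightarrow> nat \<Rightarrow> nat" where
  "cS f t = (\<Sum>k<t. if f k then 1 else 0)"
definition cF :: "(nat \<Rightarrow> bool) \<Rightarrow> nat \<Rightarrow> nat" where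
  "cF f t = (\<Sum>k<t. if f k then 0 else 1)"

lemma rw_S_to_stream: "rw_S x (to_stream f) t = real (cS f t) * (1 - x) - real (cF f t) * x"
  unfolding rw_S_def cS_def cF_def to_stream_def
  by (induction t) (auto simp: algebra_simps)

lemma pear_state_good:
  assumes p: "0 < p" "p < 1"
  shows "(\<forall>s<t. 0 \<le> rw_S (cconst p VP) (to_stream (niche_chosen VP vN e)) s) \<Longrightarrow>
     pear_state p VP vN e t = ((cS (niche_chosen VP vN e) t, cF (niche_chosen VP vN e) t),
        pear_post p VP (cS (niche_chosen VP vN e) t, cF (niche_chosen VP vN e) t))"
  (is "_ \<Longrightarrow> _ = ((cS ?f t, cF ?f t), _)")
proof (induction t)
  case 0
  then show ?case using post_zero[OF p(1)] by (simp add: cS_def cF_def)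
next
  case (Suc t)
  then have IH: "pear_state p VP vN e t = ((cS ?f t, cF ?f t), pear_post p VP (cS ?f t, cF ?f t))" by auto
  have "0 \<le> rw_S (cconst p VP) (to_stream ?f) t" using Suc.prems by auto
  then have ge: "p \<le> pear_post p VP (cS ?f t, cF ?f t)"
    using post_ge_iff[OF p] rw_S_to_stream by simp
  show ?case using IH ge by (simp add: cS_def cF_def Let_def)
qed

lemma pear_state_snd: "0 < p \<Longrightarrow> snd (pear_state p VP vN e t) = pear_post p VP (fst (pear_state p VP vN e t))"
  by (cases t) (auto simp: post_zero Let_def split: prod.splits)

lemma pear_state_frozen:
  assumes "0 < p" "snd (pear_state p VP vN e t0) < p"
  shows "t0 \<le> t \<Longrightarrow> pear_state p VP vN e t = pear_state p VP vN e t0"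
proof (induction t rule: dec_induct)
  case base then show ?case by simp
next
  case (step t)
  then show ?case using assms pear_state_snd[OF assms(1), of VP vN e t0]
    by (auto split: prod.splits simp: Let_def)
qed

lemma pear_T_eq:
  assumes p: "0 < p" "p < 1"
  shows "pear_T p VP vN e = rw_N (cconst p VP) (to_stream (\<lambda>t. niche_chosen VP vN e t))"
  unfolding pear_T_def rw_N_def
proof (rule first_time_eqI)
  fix t
  let ?f = "\<lambda>t. niche_chosen VP vN e t"
  assume H: "\<forall>s<t. \<not> (1 \<le> s \<and> rw_S (cconst p VP) (to_stream ?f) s < 0)"
  have "\<forall>s<t. 0 \<le> rw_S (cconst p VP) (to_stream ?f) s"
  proof safe
    fix s assume "s < t"
    then show "0 \<le> rw_S (cconst p VP) (to_stream ?f) s" using H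
      by (cases s) (auto simp: rw_S_def)
  qed
  from pear_state_good[OF p this]
  have st: "pear_p p VP vN e t = pear_post p VP (cS ?f t, cF ?f t)" by (simp add: pear_p_def)
  show "pear_p p VP vN e t < p \<longleftrightarrow> (1 \<le> t \<and> rw_S (cconst p VP) (to_stream ?f) t < 0)"
    unfolding st using post_ge_iff[OF p, of VP "cS ?f t" "cF ?f t"] rw_S_to_stream[of _ ?f t]
    by (cases t) (auto simp: cS_def cF_def not_le)
qed

lemma pear_T_props:
  assumes p: "0 < p" "p < 1"
  shows "(enat t < pear_T p VP vN e \<longrightarrow> pear_p p VP vN e t \<ge> p)
       \<and> (pear_T p VP vN e \<le> enat t \<longrightarrow> pear_p p VP vN e t < p)"
proof safe
  assume "enat t < pear_T p VP vN e"
  then show "p \<le> pear_p p VP vN e t" unfolding pear_T_def first_time_def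
    by (auto split: if_splits dest: not_less_Least simp: not_less)
next
  assume a: "pear_T p VP vN e \<le> enat t"
  then obtain t0 where ex: "\<exists>t. pear_p p VP vN e t < p" and t0: "t0 = (LEAST t. pear_p p VP vN e t < p)" and le: "t0 \<le> t"
    unfolding pear_T_def first_time_def by (auto split: if_splits)
  have "pear_p p VP vN e t0 < p" using ex t0 by (meson LeastI)
  then have "pear_state p VP vN e t = pear_state p VP vN e t0"
    using pear_state_frozen[OF p(1) _ le] by (simp add: pear_p_def)
  then show "pear_p p VP vN e t < p" using \<open>pear_p p VP vN e t0 < p\<close> by (simp add: pear_p_def)
qed



lemma nn_integral_exp_density: "0 < l \<Longrightarrow> (\<integral>\<^sup>+x. ennreal (exponential_density l x) \<partial>lborel) = 1"
proof -
  assume l: "0 < l"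
  interpret P: prob_space "density lborel (exponential_density l)"
    using prob_space_exponential_density[OF l] .
  have "emeasure (density lborel (exponential_density l)) UNIV = 1"
    using P.emeasure_space_1 by simp
  then show ?thesis by (simp add: emeasure_density)
qed

lemma (in prob_space) prob_exp_less:
  assumes a: "0 < a" and b: "0 < b"
    and X: "distributed M lborel X (exponential_density a)"
    and Y: "distributed M lborel Y (exponential_density b)"
    and ind: "indep_var borel X borel Y"
  shows "prob {\<omega> \<in> space M. X \<omega> < Y \<omega>} = a / (a + b)"
proof -
  have rvX[measurable]: "X \<in> borel_measurable M" and rvY[measurable]: "Y \<in> borel_measurable M"
    using X Y by (auto dest: distributed_measurable)
  have eq: "distr M borel X \<Otimes>\<^sub>M distr M borel Y = distr M (borel \<Otimes>\<^sub>M borel) (\<lambda>x. (X x, Y x))"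
    using ind indep_var_distribution_eq by blast
  have dX: "distr M borel X = density lborel (exponential_density a)"
  proof -
    have "distr M lborel X = density lborel (exponential_density a)"
      using distributed_distr_eq_density[OF X] .
    moreover have "distr M borel X = distr M lborel X" by (rule distr_cong) auto
    ultimately show ?thesis by simp
  qed
  have gt: "emeasure (distr M borel Y) {x<..} = ennreal (exp (- x * b))" if "0 \<le> x" for x
  proof -
    have "emeasure (distr M borel Y) {x<..} = emeasure M {\<omega>\<in>space M. x < Y \<omega>}"
      by (subst emeasure_distr) (auto intro!: arg_cong[where f="emeasure M"])
    also have "\<dots> = ennreal (prob {\<omega>\<in>space M. x < Y \<omega>})" by (simp add: emeasure_eq_measure)
    also have "prob {\<omega>\<in>space M. x < Y \<omega>} = exp (- x * b)"
      using exponential_distributedD_gt[OF Y that b] by simp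
    finally show ?thesis .
  qed
  interpret DY: prob_space "distr M borel Y" by (rule prob_space_distr) simp
  have S[measurable]: "{(x, y). x < y} \<in> sets (borel \<Otimes>\<^sub>M (borel :: real measure))"
  proof -
    have "{(x, y). x < y} = {z \<in> space (borel \<Otimes>\<^sub>M (borel :: real measure)). fst z < snd z}"
      by (auto simp: space_pair_measure)
    also have "\<dots> \<in> sets (borel \<Otimes>\<^sub>M (borel :: real measure))" by measurable
    finally show ?thesis .
  qed
  have "emeasure M {\<omega> \<in> space M. X \<omega> < Y \<omega>} = emeasure (distr M (borel \<Otimes>\<^sub>M borel) (\<lambda>x. (X x, Y x))) {(x, y). x < y}"
    by (subst emeasure_distr) (auto intro!: arg_cong[where f="emeasure M"])
  also have "\<dots> = emeasure (distr M borel X \<Otimes>\<^sub>M distr M borel Y) {(x, y). x < y}" by (simp add: eq)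
  also have "\<dots> = (\<integral>\<^sup>+x. emeasure (distr M borel Y) (Pair x -` {(x, y). x < y}) \<partial>distr M borel X)"
    by (rule DY.emeasure_pair_measure_alt) (simp add: S)
  also have "\<dots> = (\<integral>\<^sup>+x. ennreal (exponential_density a x) * emeasure (distr M borel Y) {x<..} \<partial>lborel)"
    unfolding dX by (subst nn_integral_density) (auto simp: vimage_def greaterThan_def)
  also have "\<dots> = (\<integral>\<^sup>+x. ennreal (a / (a + b)) * ennreal (exponential_density (a + b) x) \<partial>lborel)"
  proof (rule nn_integral_cong)
    fix x :: real
    show "ennreal (exponential_density a x) * emeasure (distr M borel Y) {x<..} =
          ennreal (a / (a + b)) * ennreal (exponential_density (a + b) x)"
    proof (cases "x < 0")
      case True then show ?thesis by (simp add: exponential_density_def)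
    next
      case False
      then have "ennreal (exponential_density a x) * emeasure (distr M borel Y) {x<..}
          = ennreal (a * exp (- x * a) * exp (- x * b))"
        using gt[of x] a by (simp add: exponential_density_def ennreal_mult)
      also have "a * exp (- x * a) * exp (- x * b) = a / (a + b) * ((a + b) * exp (- x * (a + b)))"
        using a b by (simp add: field_simps mult_exp_exp)
      also have "\<dots> = a / (a + b) * exponential_density (a + b) x"
        using False by (simp add: exponential_density_def)
      finally show ?thesis using a b by (simp add: ennreal_mult[symmetric] exponential_density_nonneg)
    qed
  qed
  also have "\<dots> = ennreal (a / (a + b))"
    using a b by (simp add: nn_integral_cmult nn_integral_exp_density)
  finally show ?thesis using a b by (simp add: emeasure_eq_measure)
qed



definition gum :: "real \<Rightarrow> real" where "gum x = exp (- exp (- (x + euler_mascheroni)))"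

lemma (in prob_space) gumbel_lt:
  assumes e[measurable]: "e \<in> borel_measurable M"
    and cdf: "\<And>x. prob {\<omega>\<in>space M. e \<omega> \<le> x} = gum x"
  shows "prob {\<omega>\<in>space M. e \<omega> < x} = gum x"
proof -
  define A where "A n = {\<omega>\<in>space M. e \<omega> \<le> x - 1 / real (Suc n)}" for n
  have "range A \<subseteq> events" unfolding A_def by auto
  moreover have "incseq A" unfolding A_def incseq_def
    by (auto simp: frac_le intro: order_trans)
  ultimately have L: "(\<lambda>n. prob (A n)) \<longlonglongrightarrow> prob (\<Union>n. A n)"
    by (rule finite_Lim_measure_incseq)
  have U: "(\<Union>n. A n) = {\<omega>\<in>space M. e \<omega> < x}"
  proof safe
    fix \<omega> n show "\<omega> \<in> A n \<Longrightarrow> e \<omega> < x"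
    proof -
      assume h: "\<omega> \<in> A n"
      have "0 < 1 / real (Suc n)" by simp
      moreover have "e \<omega> \<le> x - 1 / real (Suc n)" using h unfolding A_def by auto
      ultimately show ?thesis by linarith
    qed
  next
    fix \<omega> assume "\<omega> \<in> space M" "e \<omega> < x"
    then obtain n where "1 / real (Suc n) < x - e \<omega>"
      using reals_Archimedean[of "x - e \<omega>"] by (auto simp: inverse_eq_divide)
    then have "e \<omega> \<le> x - 1 / real (Suc n)" by linarith
    then show "\<omega> \<in> (\<Union>n. A n)" using \<open>\<omega> \<in> space M\<close> unfolding A_def by blast
  qed (auto simp: A_def)
  have s: "(\<lambda>n. x - 1 / real (Suc n)) \<longlonglongrightarrow> x - 0"
    by (intro tendsto_intros LIMSEQ_Suc[OF lim_inverse_n'])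
  have "(\<lambda>n. gum (x - 1 / real (Suc n))) \<longlonglongrightarrow> gum x"
  proof -
    have c: "isCont gum x" unfolding gum_def by (intro continuous_intros)
    show ?thesis using isCont_tendsto_compose[OF c, of "\<lambda>n. x - 1 / real (Suc n)"] s by simp
  qed
  moreover have "prob (A n) = gum (x - 1 / real (Suc n))" for n unfolding A_def by (rule cdf)
  ultimately have "(\<lambda>n. prob (A n)) \<longlonglongrightarrow> gum x" by simp
  with L U show ?thesis using LIMSEQ_unique by metis
qed

lemma (in prob_space) gumbel_exp:
  assumes e[measurable]: "e \<in> borel_measurable M"
    and cdf: "\<And>x. prob {\<omega>\<in>space M. e \<omega> \<le> x} = gum x"
  shows "distributed M lborel (\<lambda>\<omega>. exp (- (e \<omega> + s + euler_mascheroni))) (exponential_density (exp s))"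
proof (subst exponential_distributed_iff, safe)
  show "0 < exp s" by simp
  show "(\<lambda>\<omega>. exp (- (e \<omega> + s + euler_mascheroni))) \<in> borel_measurable M" by measurable
  fix a :: real assume a: "0 \<le> a"
  show "prob {\<omega>\<in>space M. exp (- (e \<omega> + s + euler_mascheroni)) \<le> a} = 1 - exp (- a * exp s)"
  proof (cases "a = 0")
    case True
    have "{\<omega>\<in>space M. exp (- (e \<omega> + s + euler_mascheroni)) \<le> a} = {}" using True
      by (auto simp: not_le)
    then show ?thesis using True by simp
  next
    case False
    then have a: "0 < a" using a by simp
    define x0 where "x0 = - ln a - s - euler_mascheroni"
    have "{\<omega>\<in>space M. exp (- (e \<omega> + s + euler_mascheroni)) \<le> a} = space M - {\<omega>\<in>space M. e \<omega> < x0}"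
    proof -
      have "exp (- (y + s + euler_mascheroni)) \<le> a \<longleftrightarrow> \<not> y < x0" for y
      proof -
        have "exp (- (y + s + euler_mascheroni)) \<le> a \<longleftrightarrow> - (y + s + euler_mascheroni) \<le> ln a"
          using a by (metis exp_le_cancel_iff exp_ln)
        then show ?thesis unfolding x0_def by linarith
      qed
      then show ?thesis by auto
    qed
    then have "prob {\<omega>\<in>space M. exp (- (e \<omega> + s + euler_mascheroni)) \<le> a} = 1 - gum x0"
      using gumbel_lt[OF e cdf, of x0] by (simp add: prob_compl)
    moreover have "gum x0 = exp (- a * exp s)"
      unfolding gum_def x0_def using a by (simp add: exp_add exp_diff)
    ultimately show ?thesis by simp
  qed
qed



lemma (in prob_space) choice_prob:
  fixes E :: "nat \<Rightarrow> 'a \<Rightarrow> real"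
  assumes ind: "indep_vars (\<lambda>_. borel) E {0,1,2}"
    and cdf: "\<And>k x. k \<in> {0,1,2} \<Longrightarrow> prob {\<omega>\<in>space M. E k \<omega> \<le> x} = gum x"
  shows "prob {\<omega>\<in>space M. v + E 1 \<omega> > VP + E 0 \<omega> \<and> v + E 1 \<omega> > E 2 \<omega>}
         = exp v / (1 + exp VP + exp v)"
proof -
  define s :: "nat \<Rightarrow> real" where "s k = (if k = 0 then VP else if k = 1 then v else 0)" for k
  define W where "W k \<omega> = exp (- (E k \<omega> + s k + euler_mascheroni))" for k \<omega>
  have meas[measurable]: "E k \<in> borel_measurable M" if "k \<in> {0,1,2}" for k
    using ind that unfolding indep_vars_def by auto
  have indW: "indep_vars (\<lambda>_. borel) W {0,1,2}"
    unfolding W_def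
    by (rule indep_vars_compose2[OF ind, where Y="\<lambda>k x. exp (- (x + s k + euler_mascheroni))"]) auto
  have dW: "distributed M lborel (W k) (exponential_density (exp (s k)))" if "k \<in> {0,1,2}" for k
    unfolding W_def using gumbel_exp[OF meas[OF that] cdf[OF that]] .
  have dmin: "distributed M lborel (\<lambda>\<omega>. Min ((\<lambda>i. W i \<omega>) ` {0,2})) (exponential_density (\<Sum>i\<in>{0,2}. exp (s i)))"
    by (rule exponential_distributed_Min) (auto intro: dW indep_vars_subset[OF indW])
  have indm: "indep_var borel (W 1) borel (\<lambda>\<omega>. Min ((\<lambda>i. W i \<omega>) ` {0,2}))"
    using indep_vars_Min[of "{0,2}" 1 W] indW by (simp add: insert_commute)
  have sum: "(\<Sum>i\<in>{0::nat,2}. exp (s i)) = exp VP + 1" by (simp add: s_def)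
  have "prob {\<omega>\<in>space M. W 1 \<omega> < Min ((\<lambda>i. W i \<omega>) ` {0,2})} = exp v / (exp v + (exp VP + 1))"
    using prob_exp_less[of "exp v" "exp VP + 1" "W 1" "\<lambda>\<omega>. Min ((\<lambda>i. W i \<omega>) ` {0,2})"]
      dW[of 1] dmin indm by (simp add: s_def sum add_pos_pos)
  moreover have "{\<omega>\<in>space M. W 1 \<omega> < Min ((\<lambda>i. W i \<omega>) ` {0,2})}
      = {\<omega>\<in>space M. v + E 1 \<omega> > VP + E 0 \<omega> \<and> v + E 1 \<omega> > E 2 \<omega>}"
    by (auto simp: W_def s_def)
  ultimately show ?thesis by (simp add: algebra_simps)
qed



lemma first_time_enat_iff: "first_time Q = enat m \<longleftrightarrow> Q m \<and> (\<forall>k<m. \<not> Q k)"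
proof
  assume h: "first_time Q = enat m"
  then have ex: "\<exists>t. Q t" and m: "m = (LEAST t. Q t)" unfolding first_time_def by (auto split: if_splits)
  show "Q m \<and> (\<forall>k<m. \<not> Q k)" using ex m by (metis LeastI not_less_Least)
next
  assume h: "Q m \<and> (\<forall>k<m. \<not> Q k)"
  then have "(LEAST t. Q t) = m" by (metis Least_equality not_le)
  then show "first_time Q = enat m" using h unfolding first_time_def by auto
qed

lemma first_time_inf_iff: "first_time Q = \<infinity> \<longleftrightarrow> (\<forall>k. \<not> Q k)"
  unfolding first_time_def by auto

lemma rw_S_meas[measurable]:
  "(\<lambda>s. rw_S x s n) \<in> borel_measurable (stream_space (measure_pmf q))"
proof -
  have [measurable]: "(\<lambda>s. s !! k) \<in> measurable (stream_space (measure_pmf q)) (count_space UNIV)" for k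
    using measurable_snth[of k "measure_pmf q"] by (simp cong: measurable_cong_sets)
  show ?thesis unfolding rw_S_def by measurable
qed

lemma sets_rwN:
  "{s \<in> space (stream_space (measure_pmf (q :: bool pmf))). rw_N x s = n} \<in> sets (stream_space (measure_pmf q))"
proof (cases n)
  case (enat m)
  have "{s \<in> space (stream_space (measure_pmf q)). rw_N x s = n} =
    {s \<in> space (stream_space (measure_pmf q)). (1 \<le> m \<and> rw_S x s m < 0) \<and> (\<forall>k<m. \<not> (1 \<le> k \<and> rw_S x s k < 0))}"
    unfolding rw_N_def enat first_time_enat_iff by simp
  also have "\<dots> \<in> sets (stream_space (measure_pmf q))" by measurable
  finally show ?thesis .
next
  case infinity
  have "{s \<in> space (stream_space (measure_pmf q)). rw_N x s = n} =
    {s \<in> space (stream_space (measure_pmf q)). \<forall>k. \<not> (1 \<le> k \<and> rw_S x s k < 0)}"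
    unfolding rw_N_def infinity first_time_inf_iff by simp
  also have "\<dots> \<in> sets (stream_space (measure_pmf q))" by measurable
  finally show ?thesis .
qed



context prob_space begin

lemma indep_eps3:
  fixes VN :: "'a \<Rightarrow> real" and eps :: "nat \<Rightarrow> nat \<Rightarrow> 'a \<Rightarrow> real"
  assumes ind: "indep_vars (\<lambda>_. borel) (\<lambda>i. case i of None \<Rightarrow> VN | Some (t, k) \<Rightarrow> eps t k)
           ({None} \<union> Some ` (UNIV \<times> {..<3}))"
  shows "indep_vars (\<lambda>_. borel) (\<lambda>k. eps t k) {0,1,2}"
proof -
  let ?X = "\<lambda>i. case i of None \<Rightarrow> VN | Some (t, k) \<Rightarrow> eps t k"
  have "indep_vars (\<lambda>k. PiM {Some (t,k)} (\<lambda>_. borel)) (\<lambda>k \<omega>. restrict (\<lambda>i. ?X i \<omega>) {Some (t,k)}) {0,1,2::nat}"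
    by (rule indep_vars_restrict[OF ind]) (auto simp: disjoint_family_on_def)
  then have "indep_vars (\<lambda>_. borel) (\<lambda>k \<omega>. (\<lambda>h. h (Some (t,k))) (restrict (\<lambda>i. ?X i \<omega>) {Some (t,k)})) {0,1,2::nat}"
    by (rule indep_vars_compose2) (rule measurable_component_singleton, simp)
  then show ?thesis by simp
qed

lemma indep_Z:
  fixes VN :: "'a \<Rightarrow> real" and eps :: "nat \<Rightarrow> nat \<Rightarrow> 'a \<Rightarrow> real"
  assumes ind: "indep_vars (\<lambda>_. borel) (\<lambda>i. case i of None \<Rightarrow> VN | Some (t, k) \<Rightarrow> eps t k)
           ({None} \<union> Some ` (UNIV \<times> {..<3}))"
  shows "indep_vars (\<lambda>_. measure_pmf q) (\<lambda>t \<omega>. niche_chosen VP v (\<lambda>t k. eps t k \<omega>) t) UNIV"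
proof -
  let ?X = "\<lambda>i. case i of None \<Rightarrow> VN | Some (t, k) \<Rightarrow> eps t k"
  let ?K = "\<lambda>t::nat. Some ` ({t} \<times> {..<3::nat})"
  have "indep_vars (\<lambda>t. PiM (?K t) (\<lambda>_. borel)) (\<lambda>t \<omega>. restrict (\<lambda>i. ?X i \<omega>) (?K t)) UNIV"
    by (rule indep_vars_restrict[OF ind]) (auto simp: disjoint_family_on_def)
  then have "indep_vars (\<lambda>_. measure_pmf q)
     (\<lambda>t \<omega>. (\<lambda>h. niche_chosen VP v (\<lambda>t' k. h (Some (t', k))) t) (restrict (\<lambda>i. ?X i \<omega>) (?K t))) UNIV"
  proof (rule indep_vars_compose2)
    fix t :: nat
    have [measurable]: "(\<lambda>h. h (Some (t, k))) \<in> borel_measurable (PiM (?K t) (\<lambda>_. borel))" if "k < 3" for k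
      by (rule measurable_component_singleton) (use that in auto)
    have "(\<lambda>h. niche_chosen VP v (\<lambda>t' k. h (Some (t', k))) t) \<in> measurable (PiM (?K t) (\<lambda>_. borel)) (count_space UNIV)"
      unfolding niche_chosen_def by measurable
    then show "(\<lambda>h. niche_chosen VP v (\<lambda>t' k. h (Some (t', k))) t) \<in> measurable (PiM (?K t) (\<lambda>_. borel)) (measure_pmf q)"
      by (simp cong: measurable_cong_sets)
  qed
  then show ?thesis by (simp add: niche_chosen_def)
qed

lemma indep_VZ:
  fixes VN :: "'a \<Rightarrow> real" and eps :: "nat \<Rightarrow> nat \<Rightarrow> 'a \<Rightarrow> real"
  assumes ind: "indep_vars (\<lambda>_. borel) (\<lambda>i. case i of None \<Rightarrow> VN | Some (t, k) \<Rightarrow> eps t k)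
           ({None} \<union> Some ` (UNIV \<times> {..<3}))"
  shows "indep_var (PiM UNIV (\<lambda>_. measure_pmf q)) (\<lambda>\<omega> t. VN \<omega> = w) (PiM UNIV (\<lambda>_. measure_pmf q)) (\<lambda>\<omega> t. niche_chosen VP v (\<lambda>t k. eps t k \<omega>) t)"
proof -
  let ?X = "\<lambda>i. case i of None \<Rightarrow> VN | Some (t, k) \<Rightarrow> eps t k"
  let ?I = "Some ` (UNIV \<times> {..<3::nat})"
  have "indep_var (PiM {None} (\<lambda>_. borel)) (\<lambda>\<omega>. restrict (\<lambda>i. ?X i \<omega>) {None})
                  (PiM ?I (\<lambda>_. borel)) (\<lambda>\<omega>. restrict (\<lambda>i. ?X i \<omega>) ?I)"
    by (rule indep_var_restrict[OF ind]) auto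
  then have "indep_var (PiM UNIV (\<lambda>_. measure_pmf q)) ((\<lambda>h t. h None = w) \<circ> (\<lambda>\<omega>. restrict (\<lambda>i. ?X i \<omega>) {None}))
     (PiM UNIV (\<lambda>_. measure_pmf q)) ((\<lambda>h t. niche_chosen VP v (\<lambda>t' k. h (Some (t', k))) t) \<circ> (\<lambda>\<omega>. restrict (\<lambda>i. ?X i \<omega>) ?I))"
  proof (rule indep_var_compose)
    have [measurable]: "(\<lambda>h. h None) \<in> borel_measurable (PiM {None} (\<lambda>_. borel))"
      by (rule measurable_component_singleton) simp
    have "(\<lambda>h. h None = w) \<in> measurable (PiM {None} (\<lambda>_. borel)) (count_space UNIV)"
      by measurable
    then have "(\<lambda>h. h None = w) \<in> measurable (PiM {None} (\<lambda>_. borel)) (measure_pmf q)"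
      by (simp cong: measurable_cong_sets)
    then show "(\<lambda>h t. h None = w) \<in> measurable (PiM {None} (\<lambda>_. borel)) (PiM UNIV (\<lambda>_. measure_pmf q))"
      by (intro measurable_PiM_single') auto
    have [measurable]: "(\<lambda>h. h (Some (t, k))) \<in> borel_measurable (PiM ?I (\<lambda>_. borel))" if "k < 3" for t k
      by (rule measurable_component_singleton) (use that in auto)
    have "(\<lambda>h. niche_chosen VP v (\<lambda>t' k. h (Some (t', k))) t) \<in> measurable (PiM ?I (\<lambda>_. borel)) (measure_pmf q)" for t
    proof -
      have "(\<lambda>h. niche_chosen VP v (\<lambda>t' k. h (Some (t', k))) t) \<in> measurable (PiM ?I (\<lambda>_. borel)) (count_space UNIV)"
        unfolding niche_chosen_def by measurable
      then show ?thesis by (simp cong: measurable_cong_sets)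
    qed
    then show "(\<lambda>h t. niche_chosen VP v (\<lambda>t' k. h (Some (t', k))) t) \<in> measurable (PiM ?I (\<lambda>_. borel)) (PiM UNIV (\<lambda>_. measure_pmf q))"
      by (intro measurable_PiM_single') auto
  qed
  then show ?thesis by (simp add: comp_def niche_chosen_def)
qed

end


context prob_space begin

lemma main_v:
  fixes VN :: "'a \<Rightarrow> real" and eps :: "nat \<Rightarrow> nat \<Rightarrow> 'a \<Rightarrow> real"
  assumes ind: "indep_vars (\<lambda>_. borel) (\<lambda>i. case i of None \<Rightarrow> VN | Some (t, k) \<Rightarrow> eps t k)
           ({None} \<union> Some ` (UNIV \<times> {..<3}))"
    and cdf: "\<And>t k x. k < 3 \<Longrightarrow>
           measure M {\<omega> \<in> space M. eps t k \<omega> \<le> x} = exp (- exp (- (x + euler_mascheroni)))"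
    and p: "0 < p" "p < 1"
  shows "prob {\<omega>\<in>space M. pear_T p VP (VN \<omega>) (\<lambda>t k. eps t k \<omega>) = n \<and> VN \<omega> = v}
     = prob {\<omega>\<in>space M. VN \<omega> = v} *
       measure (rw_space (exp v / (1 + exp VP + exp v)))
         {s \<in> space (rw_space (exp v / (1 + exp VP + exp v))). rw_N (cconst p VP) s = n}"
proof -
  define \<rho> where "\<rho> = exp v / (1 + exp VP + exp v)"
  define B where "B = measure_pmf (bernoulli_pmf \<rho>)"
  define c where "c = cconst p VP"
  have \<rho>: "0 \<le> \<rho>" "\<rho> \<le> 1" unfolding \<rho>_def by (auto simp: divide_simps add_pos_pos)
  let ?X = "\<lambda>i. case i of None \<Rightarrow> VN | Some (t, k) \<Rightarrow> eps t k"
  have rv: "random_variable borel (?X i)" if "i \<in> {None} \<union> Some ` (UNIV \<times> {..<3})" for i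
    using ind that unfolding indep_vars_def by blast
  have meas_eps[measurable]: "eps t k \<in> borel_measurable M" if "k < 3" for t k
    using rv[of "Some (t,k)"] that by auto
  have meas_VN[measurable]: "VN \<in> borel_measurable M" using rv[of None] by auto
  define Z where "Z t \<omega> = niche_chosen VP v (\<lambda>t k. eps t k \<omega>) t" for t \<omega>
  have Zmeas: "Z t \<in> measurable M B" for t
  proof -
    have [measurable]: "eps t 0 \<in> borel_measurable M" "eps t 1 \<in> borel_measurable M" "eps t 2 \<in> borel_measurable M"
      by (auto intro: meas_eps)
    have "Z t \<in> measurable M (count_space UNIV)" unfolding Z_def niche_chosen_def by measurable
    then show ?thesis unfolding B_def by (simp cong: measurable_cong_sets)
  qed
  have probZ: "prob {\<omega>\<in>space M. Z t \<omega>} = \<rho>" for t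
  proof -
    have "prob {\<omega>\<in>space M. v + eps t 1 \<omega> > VP + eps t 0 \<omega> \<and> v + eps t 1 \<omega> > eps t 2 \<omega>}
         = exp v / (1 + exp VP + exp v)"
      by (rule choice_prob[OF indep_eps3[OF ind]]) (auto simp: gum_def cdf)
    then show ?thesis unfolding Z_def niche_chosen_def \<rho>_def by simp
  qed
  have distrZ: "distr M B (Z t) = B" for t
  proof (rule measure_eqI_countable[where A=UNIV])
    show "sets (distr M B (Z t)) = Pow UNIV" "sets B = Pow UNIV" by (simp_all add: B_def)
    show "countable (UNIV :: bool set)" by simp
    fix b :: bool
    have "emeasure (distr M B (Z t)) {b} = emeasure M (Z t -` {b} \<inter> space M)"
      by (rule emeasure_distr[OF Zmeas]) (simp add: B_def)
    also have "\<dots> = ennreal (if b then \<rho> else 1 - \<rho>)"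
    proof (cases b)
      case True
      have "Z t -` {b} \<inter> space M = {\<omega>\<in>space M. Z t \<omega>}" using True by auto
      then show ?thesis using True probZ[of t] by (simp add: emeasure_eq_measure)
    next
      case False
      have "Z t -` {b} \<inter> space M = space M - {\<omega>\<in>space M. Z t \<omega>}" using False by auto
      moreover have "{\<omega>\<in>space M. Z t \<omega>} \<in> events"
      proof -
        have "Z t -` {True} \<inter> space M \<in> events" by (rule measurable_sets[OF Zmeas]) (simp add: B_def)
        moreover have "Z t -` {True} \<inter> space M = {\<omega>\<in>space M. Z t \<omega>}" by auto
        ultimately show ?thesis by simp
      qed
      ultimately show ?thesis using False probZ[of t] by (simp add: emeasure_eq_measure prob_compl)
    qed
    also have "\<dots> = emeasure B {b}" unfolding B_def using \<rho>
      by (simp add: emeasure_pmf_single)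
    finally show "emeasure (distr M B (Z t)) {b} = emeasure B {b}" .
  qed
  define P where "P = PiM (UNIV :: nat set) (\<lambda>_. B)"
  define Zf where "Zf \<omega> = (\<lambda>t. Z t \<omega>)" for \<omega>
  have indZ: "indep_vars (\<lambda>_. B) Z UNIV"
    using indep_Z[OF ind, of "bernoulli_pmf \<rho>" VP v] unfolding B_def Z_def by simp
  have distr_all: "distr M P Zf = P"
  proof -
    have "distr M (PiM UNIV (\<lambda>_. B)) (\<lambda>x. \<lambda>i\<in>UNIV. Z i x) = PiM UNIV (\<lambda>i. distr M B (Z i))"
      using indep_vars_iff_distr_eq_PiM[where I=UNIV and M'="\<lambda>_. B" and X=Z] Zmeas indZ by simp
    then show ?thesis unfolding P_def Zf_def by (simp add: distrZ restrict_UNIV)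
  qed
  have Zfmeas: "Zf \<in> measurable M P"
    unfolding P_def Zf_def
    by (intro measurable_PiM_single', rule Zmeas) (auto simp: B_def)
  define Sn where "Sn = {s \<in> space (stream_space B). rw_N c s = n}"
  have Sn: "Sn \<in> sets (stream_space B)" unfolding Sn_def B_def by (rule sets_rwN)
  define S' where "S' = to_stream -` Sn \<inter> space P"
  have S': "S' \<in> sets P" unfolding S'_def P_def
    by (rule measurable_sets[OF measurable_to_stream Sn])
  have "measure (stream_space B) Sn = measure (distr P (stream_space B) to_stream) Sn"
    unfolding P_def by (subst stream_space_eq_distr) simp
  also have "\<dots> = measure P S'"
    unfolding S'_def P_def by (rule measure_distr[OF measurable_to_stream Sn])
  also have "\<dots> = measure (distr M P Zf) S'" by (simp add: distr_all)
  also have "\<dots> = prob (Zf -` S' \<inter> space M)"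
    by (rule measure_distr[OF Zfmeas S'])
  finally have mS: "measure (stream_space B) Sn = prob (Zf -` S' \<inter> space M)" .
  define Xa where "Xa = {f \<in> space P. f 0}"
  have Xa: "Xa \<in> sets P"
  proof -
    have "(\<lambda>f. f 0) \<in> measurable P B" unfolding P_def by (rule measurable_component_singleton) simp
    then have "(\<lambda>f. f 0) \<in> measurable P (count_space UNIV)" unfolding B_def
      by (simp cong: measurable_cong_sets)
    then show ?thesis unfolding Xa_def by measurable
  qed
  have indVZ: "indep_var P (\<lambda>\<omega> t. VN \<omega> = v) P Zf"
    using indep_VZ[OF ind, of "bernoulli_pmf \<rho>" v VP v] unfolding P_def B_def Zf_def Z_def by simp
  have split: "prob ((\<lambda>x. ((\<lambda>t. VN x = v), Zf x)) -` (Xa \<times> S') \<inter> space M)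
      = prob ((\<lambda>\<omega> t. VN \<omega> = v) -` Xa \<inter> space M) * prob (Zf -` S' \<inter> space M)"
    by (rule indep_varD[OF indVZ Xa S'])
  have spP: "f \<in> space P" for f :: "nat \<Rightarrow> bool" unfolding P_def B_def by (simp add: space_PiM)
  have e1: "(\<lambda>\<omega> t. VN \<omega> = v) -` Xa \<inter> space M = {\<omega>\<in>space M. VN \<omega> = v}"
    unfolding Xa_def using spP by auto
  have e2: "(\<lambda>x. ((\<lambda>t. VN x = v), Zf x)) -` (Xa \<times> S') \<inter> space M
     = {\<omega>\<in>space M. pear_T p VP (VN \<omega>) (\<lambda>t k. eps t k \<omega>) = n \<and> VN \<omega> = v}"
  proof -
    have "Zf \<omega> \<in> S' \<longleftrightarrow> pear_T p VP v (\<lambda>t k. eps t k \<omega>) = n" for \<omega>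
    proof -
      have "Zf \<omega> = niche_chosen VP v (\<lambda>t k. eps t k \<omega>)" unfolding Zf_def Z_def by simp
      moreover have "to_stream g \<in> space (stream_space B)" for g
        unfolding B_def by (simp add: space_stream_space)
      ultimately show ?thesis unfolding S'_def Sn_def c_def using spP pear_T_eq[OF p] by auto
    qed
    then show ?thesis unfolding Xa_def using spP by auto
  qed
  have "rw_space \<rho> = stream_space B" unfolding rw_space_def B_def ..
  then show ?thesis
    using split mS unfolding e1 e2 Sn_def c_def \<rho>_def[symmetric] by (simp add: mult.commute)
qed

end

theorem lemma1:
  fixes M :: "'a measure" and p VP :: real
    and VN :: "'a \<Rightarrow> real" and eps :: "nat \<Rightarrow> nat \<Rightarrow> 'a \<Rightarrow> real"
  assumes "prob_space M"
    and "0 < p" and "p < 1" and "0 \<le> VP"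
    and "prob_space.indep_vars M (\<lambda>_. borel)
           (\<lambda>i. case i of None \<Rightarrow> VN | Some (t, k) \<Rightarrow> eps t k)
           ({None} \<union> Some ` (UNIV \<times> {..<3}))"
    and "\<And>t k x. k < 3 \<Longrightarrow>
           measure M {\<omega> \<in> space M. eps t k \<omega> \<le> x} = exp (- exp (- (x + euler_mascheroni)))"
    and "measure M {\<omega> \<in> space M. VN \<omega> = (1 - p) / p} = p"
    and "measure M {\<omega> \<in> space M. VN \<omega> = -1} = 1 - p"
  shows "(\<forall>n::enat.
            measure M {\<omega> \<in> space M. pear_T p VP (VN \<omega>) (\<lambda>t k. eps t k \<omega>) = n \<and> VN \<omega> = (1 - p) / p}
              / measure M {\<omega> \<in> space M. VN \<omega> = (1 - p) / p}
            = measure (rw_space (rho1 p VP))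
                {\<omega> \<in> space (rw_space (rho1 p VP)). rw_N (cconst p VP) \<omega> = n})
       \<and> (\<forall>n::enat.
            measure M {\<omega> \<in> space M. pear_T p VP (VN \<omega>) (\<lambda>t k. eps t k \<omega>) = n \<and> VN \<omega> = -1}
              / measure M {\<omega> \<in> space M. VN \<omega> = -1}
            = measure (rw_space (rho2 p VP))
                {\<omega> \<in> space (rw_space (rho2 p VP)). rw_N (cconst p VP) \<omega> = n})
       \<and> (\<forall>\<omega> \<in> space M. \<forall>t::nat.
            (enat t < pear_T p VP (VN \<omega>) (\<lambda>t k. eps t k \<omega>) \<longrightarrow> pear_p p VP (VN \<omega>) (\<lambda>t k. eps t k \<omega>) t \<ge> p)
          \<and> (pear_T p VP (VN \<omega>) (\<lambda>t k. eps t k \<omega>) \<le> enat t \<longrightarrow> pear_p p VP (VN \<omega>) (\<lambda>t k. eps t k \<omega>) t < p))"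
proof (intro conjI allI ballI)
  interpret prob_space M by (rule assms(1))
  have p: "0 < p" "p < 1" using assms(2,3) by auto
  fix n :: enat
  show "measure M {\<omega> \<in> space M. pear_T p VP (VN \<omega>) (\<lambda>t k. eps t k \<omega>) = n \<and> VN \<omega> = (1 - p) / p}
              / measure M {\<omega> \<in> space M. VN \<omega> = (1 - p) / p}
            = measure (rw_space (rho1 p VP))
                {\<omega> \<in> space (rw_space (rho1 p VP)). rw_N (cconst p VP) \<omega> = n}"
    using main_v[OF assms(5) assms(6) p, of VP n "(1 - p) / p"] assms(7) p
    by (simp add: rho1_def)
next
  interpret prob_space M by (rule assms(1))
  have p: "0 < p" "p < 1" using assms(2,3) by auto
  fix n :: enat
  show "measure M {\<omega> \<in> space M. pear_T p VP (VN \<omega>) (\<lambda>t k. eps t k \<omega>) = n \<and> VN \<omega> = -1}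
              / measure M {\<omega> \<in> space M. VN \<omega> = -1}
            = measure (rw_space (rho2 p VP))
                {\<omega> \<in> space (rw_space (rho2 p VP)). rw_N (cconst p VP) \<omega> = n}"
    using main_v[OF assms(5) assms(6) p, of VP n "-1"] assms(8) p
    by (simp add: rho2_def)
next
  fix \<omega> t
  show "enat t < pear_T p VP (VN \<omega>) (\<lambda>t k. eps t k \<omega>) \<longrightarrow> pear_p p VP (VN \<omega>) (\<lambda>t k. eps t k \<omega>) t \<ge> p"
    using pear_T_props[of p t VP "VN \<omega>" "\<lambda>t k. eps t k \<omega>"] assms(2,3) by blast
next
  fix \<omega> t
  show "pear_T p VP (VN \<omega>) (\<lambda>t k. eps t k \<omega>) \<le> enat t \<longrightarrow> pear_p p VP (VN \<omega>) (\<lambda>t k. eps t k \<omega>) t < p"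
    using pear_T_props[of p t VP "VN \<omega>" "\<lambda>t k. eps t k \<omega>"] assms(2,3) by blast
qed

end
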